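(* Let $X$ be a compact Hausdorff space and $\phi_1,\dots,\phi_m$ real-valued continuous functions on $X$, and let $\mathcal C(X,1,\boldsymbol\phi)$ be the set of positive scalar Borel measures $\mu$ on $X$ with $\mu(X)=1$ and $\int_X\phi_i\,d\mu=0$ for $i=1,\dots,m$. Then $\mathcal C(X,1,\boldsymbol\phi)\neq\emptyset$ if and only if for some natural number $n$ with $1\le n\le m+1$ there exist $n$ distinct points $x_1,\dots,x_n\in X$ such that $0\in\mathbb R^m$ is an interior point of the convex hull of $\{\boldsymbol\phi(x_1),\dots,\boldsymbol\phi(x_n)\}$, where $\boldsymbol\phi(x_j)=(\phi_1(x_j),\dots,\phi_m(x_j))^T$.
   Context: A vector $v$ is an interior point of the convex hull of $\{u_1,\dots,u_n\}\subset\mathbb R^m$ if $v=\sum_j\lambda_ju_j$ with $\lambda_j>0$, $\sum_j\lambda_j=1$, and the coefficients $\lambda_1,\dots,\lambda_n$ are uniquely determined by these conditions. *)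

theory Defs
  imports "HOL-Analysis.Analysis" "HOL-Probability.Probability"
begin

text \<open>Vectors in R^m are represented as functions nat => real, only the
coordinates i < m being relevant. The family u_1..u_n is indexed by j < n.\<close>

definition interior_conv_point ::
  "nat \<Rightarrow> nat \<Rightarrow> (nat \<Rightarrow> nat \<Rightarrow> real) \<Rightarrow> (nat \<Rightarrow> real) \<Rightarrow> bool" where
  "interior_conv_point m n u v \<longleftrightarrow>
     (\<exists>l :: nat \<Rightarrow> real. (\<forall>j<n. l j > 0) \<and> (\<Sum>j<n. l j) = 1 \<and>
        (\<forall>i<m. v i = (\<Sum>j<n. l j * u j i))) \<and>
     (\<forall>l l' :: nat \<Rightarrow> real.
        ((\<forall>j<n. l j > 0) \<and> (\<Sum>j<n. l j) = 1 \<and> (\<forall>i<m. v i = (\<Sum>j<n. l j * u j i))) \<and>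
        ((\<forall>j<n. l' j > 0) \<and> (\<Sum>j<n. l' j) = 1 \<and> (\<forall>i<m. v i = (\<Sum>j<n. l' j * u j i)))
        \<longrightarrow> (\<forall>j<n. l j = l' j))"

definition moment_set :: "nat \<Rightarrow> (nat \<Rightarrow> 'a::topological_space \<Rightarrow> real) \<Rightarrow> 'a measure set" where
  "moment_set m phi = {\<mu>. sets \<mu> = sets (borel :: 'a measure) \<and>
      emeasure \<mu> (space \<mu>) = 1 \<and> (\<forall>i<m. (\<integral>x. phi i x \<partial>\<mu>) = 0)}"

end

theory Submission
  imports Defs
begin

lemma dep_lemma:
  fixes u :: "'j \<Rightarrow> nat \<Rightarrow> real"
  assumes "finite J" "card J > k"
  shows "\<exists>d. (\<exists>j\<in>J. d j \<noteq> 0) \<and> (\<forall>i<k. (\<Sum>j\<in>J. d j * u j i) = 0)"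
  using assms
proof (induction k arbitrary: J u)
  case 0
  then obtain j where "j \<in> J" by fastforce
  then show ?case by (intro exI[of _ "\<lambda>z. if z = j then 1 else 0"]) auto
next
  case (Suc k)
  show ?case
  proof (cases "\<forall>j\<in>J. u j k = 0")
    case True
    from Suc.IH[of J u] Suc.prems obtain d where d: "\<exists>j\<in>J. d j \<noteq> 0" "\<forall>i<k. (\<Sum>j\<in>J. d j * u j i) = 0"
      by auto
    have "\<forall>i<Suc k. (\<Sum>j\<in>J. d j * u j i) = 0"
      using d(2) True by (auto simp: less_Suc_eq)
    with d(1) show ?thesis by blast
  next
    case False
    then obtain j0 where j0: "j0 \<in> J" "u j0 k \<noteq> 0" by blast
    define J' where "J' = J - {j0}"
    have fJ': "finite J'" using Suc.prems by (simp add: J'_def)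
    have cJ': "card J' > k" using Suc.prems j0 by (simp add: J'_def card_Diff_singleton)
    define c where "c j = u j k / u j0 k" for j
    define u' where "u' j i = u j i - c j * u j0 i" for j i
    from Suc.IH[OF fJ' cJ', of u'] obtain d' where
      d': "\<exists>j\<in>J'. d' j \<noteq> 0" "\<forall>i<k. (\<Sum>j\<in>J'. d' j * u' j i) = 0" by blast
    define d where "d z = (if z = j0 then - (\<Sum>j\<in>J'. d' j * c j) else d' z)" for z
    have j0J': "j0 \<notin> J'" by (simp add: J'_def)
    have J: "J = insert j0 J'" using j0 by (auto simp: J'_def)
    have sumJ: "(\<Sum>j\<in>J. d j * u j i) = d j0 * u j0 i + (\<Sum>j\<in>J'. d' j * u j i)" for i
    proof -
      have "(\<Sum>j\<in>J. d j * u j i) = d j0 * u j0 i + (\<Sum>j\<in>J'. d j * u j i)"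
        unfolding J using fJ' j0J' by simp
      also have "(\<Sum>j\<in>J'. d j * u j i) = (\<Sum>j\<in>J'. d' j * u j i)"
        using j0J' by (intro sum.cong) (auto simp: d_def)
      finally show ?thesis .
    qed
    have "\<forall>i<Suc k. (\<Sum>j\<in>J. d j * u j i) = 0"
    proof (intro allI impI)
      fix i assume "i < Suc k"
      then consider "i < k" | "i = k" by linarith
      then show "(\<Sum>j\<in>J. d j * u j i) = 0"
      proof cases
        case 1
        have "0 = (\<Sum>j\<in>J'. d' j * u' j i)" using d'(2) 1 by simp
        also have "\<dots> = (\<Sum>j\<in>J'. d' j * u j i) - (\<Sum>j\<in>J'. d' j * c j) * u j0 i"
          by (simp add: u'_def right_diff_distrib sum_subtractf sum_distrib_right mult.assoc mult.left_commute)
        finally show ?thesis using sumJ[of i] j0J' by (simp add: d_def)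
      next
        case 2
        have "(\<Sum>j\<in>J'. d' j * c j) * u j0 k = (\<Sum>j\<in>J'. d' j * u j k)"
          using j0(2) by (simp add: sum_distrib_right c_def)
        then show ?thesis using sumJ[of i] 2 by (simp add: d_def)
      qed
    qed
    moreover have "\<exists>j\<in>J. d j \<noteq> 0" using d'(1) j0J' J by (auto simp: d_def)
    ultimately show ?thesis by blast
  qed
qed

definition rep :: "('a \<Rightarrow> nat \<Rightarrow> real) \<Rightarrow> nat \<Rightarrow> (nat \<Rightarrow> real) \<Rightarrow> 'a set \<Rightarrow> ('a \<Rightarrow> real) \<Rightarrow> bool" where
  "rep v m y F w \<longleftrightarrow> finite F \<and> (\<forall>x\<in>F. 0 < w x) \<and> sum w F = 1 \<and>
     (\<forall>i<m. (\<Sum>x\<in>F. w x * v x i) = y i)"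

lemma reduce_lemma:
  assumes r: "rep v m y F w" and x1: "x1 \<in> F" "d x1 \<noteq> 0" and sd: "sum d F = 0"
    and md: "\<forall>i<m. (\<Sum>x\<in>F. d x * v x i) = 0"
  shows "\<exists>F' w'. F' \<subset> F \<and> rep v m y F' w'"
proof -
  have fin: "finite F" and wpos: "\<And>x. x \<in> F \<Longrightarrow> 0 < w x" and sw: "sum w F = 1"
    and mw: "\<And>i. i < m \<Longrightarrow> (\<Sum>x\<in>F. w x * v x i) = y i"
    using r by (auto simp: rep_def)
  define N where "N = {x\<in>F. d x < 0}"
  have "N \<noteq> {}"
  proof
    assume "N = {}"
    then have "\<forall>x\<in>F. 0 \<le> d x" by (auto simp: N_def not_less)
    with sd fin have "\<forall>x\<in>F. d x = 0" by (simp add: sum_nonneg_eq_0_iff)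
    with x1 show False by auto
  qed
  have finN: "finite N" using fin by (simp add: N_def)
  define t where "t = Min ((\<lambda>x. w x / (- d x)) ` N)"
  have "t \<in> (\<lambda>x. w x / (- d x)) ` N"
    unfolding t_def using finN \<open>N \<noteq> {}\<close> by (intro Min_in) auto
  then obtain x0 where x0: "x0 \<in> N" "t = w x0 / (- d x0)" by blast
  have tle: "t \<le> w x / (- d x)" if "x \<in> N" for x
    using that finN by (auto simp: t_def)
  have tpos: "t > 0" using x0 wpos[of x0] by (auto simp: N_def divide_pos_neg)
  define w2 where "w2 x = w x + t * d x" for x
  have w2nn: "0 \<le> w2 x" if "x \<in> F" for x
  proof (cases "d x < 0")
    case True
    then have "x \<in> N" using that by (simp add: N_def)
    from tle[OF this] True have "t * (- d x) \<le> w x" by (simp add: field_simps)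
    then show ?thesis by (simp add: w2_def algebra_simps)
  next
    case False
    then show ?thesis using tpos wpos[OF that] by (simp add: w2_def)
  qed
  have w2x0: "w2 x0 = 0" using x0 by (auto simp: w2_def N_def field_simps)
  define F' where "F' = {x\<in>F. 0 < w2 x}"
  have sub: "F' \<subset> F"
  proof -
    have "x0 \<in> F" "x0 \<notin> F'" using x0 w2x0 by (auto simp: F'_def N_def)
    then show ?thesis by (auto simp: F'_def)
  qed
  have eqs: "(\<Sum>x\<in>F'. f x * w2 x) = (\<Sum>x\<in>F. f x * w2 x)" for f :: "'a \<Rightarrow> real"
  proof (rule sum.mono_neutral_left[OF fin])
    show "F' \<subseteq> F" using sub by auto
    show "\<forall>x\<in>F - F'. f x * w2 x = 0" using w2nn by (force simp: F'_def)
  qed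
  have "sum w2 F' = 1"
    using eqs[of "\<lambda>_. 1"] sw sd by (simp add: w2_def sum.distrib sum_distrib_left[symmetric])
  moreover have "(\<Sum>x\<in>F'. w2 x * v x i) = y i" if "i < m" for i
  proof -
    have "(\<Sum>x\<in>F'. w2 x * v x i) = (\<Sum>x\<in>F. w2 x * v x i)"
      using eqs[of "\<lambda>x. v x i"] by (simp add: mult.commute)
    also have "\<dots> = (\<Sum>x\<in>F. w x * v x i) + t * (\<Sum>x\<in>F. d x * v x i)"
      by (simp add: w2_def algebra_simps sum.distrib sum_distrib_left)
    finally show ?thesis using mw[OF that] md that by simp
  qed
  moreover have "finite F'" using fin by (simp add: F'_def)
  ultimately have "rep v m y F' w2" by (auto simp: rep_def F'_def)
  with sub show ?thesis by blast
qed

lemma minimal_rep: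
  assumes "rep v m y F w"
  shows "\<exists>F' w'. F' \<subseteq> F \<and> rep v m y F' w' \<and> card F' \<le> Suc m \<and>
           (\<forall>w''. rep v m y F' w'' \<longrightarrow> (\<forall>x\<in>F'. w'' x = w' x))"
  using assms
proof (induction "card F" arbitrary: F w rule: less_induct)
  case less
  have fin: "finite F" using less.prems by (simp add: rep_def)
  show ?case
  proof (cases "\<exists>F'' w''. F'' \<subset> F \<and> rep v m y F'' w''")
    case True
    then obtain F'' w'' where F'': "F'' \<subset> F" "rep v m y F'' w''" by blast
    have "card F'' < card F" using F''(1) fin by (simp add: psubset_card_mono)
    from less.hyps[OF this F''(2)] F''(1) show ?thesis by blast
  next
    case False
    note noF = False
    have card: "card F \<le> Suc m"
    proof (rule ccontr)
      assume "\<not> card F \<le> Suc m"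
      then have "card F > Suc m" by simp
      from dep_lemma[OF fin this, of "\<lambda>x i. if i < m then v x i else 1"]
      obtain d where d: "\<exists>j\<in>F. d j \<noteq> 0"
        "\<forall>i<Suc m. (\<Sum>j\<in>F. d j * (if i < m then v j i else 1)) = 0" by blast
      have "sum d F = 0" using d(2)[rule_format, of m] by simp
      moreover have "\<forall>i<m. (\<Sum>x\<in>F. d x * v x i) = 0"
      proof (intro allI impI)
        fix i assume "i < m"
        then show "(\<Sum>x\<in>F. d x * v x i) = 0" using d(2)[rule_format, of i] by simp
      qed
      ultimately show False using reduce_lemma[OF less.prems] d(1) noF by blast
    qed
    have uniq: "\<forall>w''. rep v m y F w'' \<longrightarrow> (\<forall>x\<in>F. w'' x = w x)"
    proof (intro allI impI ballI, rule ccontr)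
      fix w'' x assume r'': "rep v m y F w''" and x: "x \<in> F" "w'' x \<noteq> w x"
      define d where "d z = w'' z - w z" for z
      have "sum d F = 0" using r'' less.prems by (simp add: d_def rep_def sum_subtractf)
      moreover have "\<forall>i<m. (\<Sum>x\<in>F. d x * v x i) = 0"
        using r'' less.prems by (simp add: d_def rep_def left_diff_distrib sum_subtractf)
      moreover have "d x \<noteq> 0" using x by (simp add: d_def)
      ultimately show False using reduce_lemma[OF less.prems x(1)] noF by blast
    qed
    show ?thesis using card uniq less.prems by blast
  qed
qed

definition comb :: "'a set \<Rightarrow> ('a \<Rightarrow> real) \<Rightarrow> ('a \<Rightarrow> nat \<Rightarrow> real) \<Rightarrow> nat \<Rightarrow> real" where
  "comb F w v = (\<lambda>i. \<Sum>x\<in>F. w x * v x i)"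

definition Tk :: "('a \<Rightarrow> nat \<Rightarrow> real) \<Rightarrow> nat \<Rightarrow> (nat \<Rightarrow> real) set" where
  "Tk v k = {comb F w v | F w. finite F \<and> F \<noteq> {} \<and> card F \<le> Suc k \<and> (\<forall>x\<in>F. 0 \<le> w x) \<and> sum w F = 1}"

definition gstep :: "('a \<Rightarrow> nat \<Rightarrow> real) \<Rightarrow> (nat \<Rightarrow> real) \<times> real \<times> 'a \<Rightarrow> nat \<Rightarrow> real" where
  "gstep v = (\<lambda>(y, s, x). (\<lambda>i. (1 - s) * y i + s * v x i))"

lemma comb_single: "comb {x} (\<lambda>_. 1) v = v x"
  by (simp add: comb_def)

lemma v_in_Tk: "v x \<in> Tk v k"
  unfolding Tk_def by (rule CollectI, rule exI[of _ "{x}"], rule exI[of _ "\<lambda>_. 1"]) (simp add: comb_single)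

lemma Tk_0: "Tk v 0 = range v"
proof
  show "range v \<subseteq> Tk v 0" by (auto intro: v_in_Tk)
  show "Tk v 0 \<subseteq> range v"
  proof
    fix y assume "y \<in> Tk v 0"
    then obtain F w where F: "y = comb F w v" "finite F" "F \<noteq> {}" "card F \<le> 1" "sum w F = 1"
      by (auto simp: Tk_def)
    then have "card F = 1" by (simp add: Suc_leI card_gt_0_iff le_antisym)
    then obtain x where "F = {x}" by (auto simp: card_1_singleton_iff)
    with F show "y \<in> range v" by (auto simp: comb_def)
  qed
qed

lemma Tk_Suc: "Tk v (Suc k) = gstep v ` (Tk v k \<times> ({0..1} \<times> UNIV))"
proof
  show "gstep v ` (Tk v k \<times> ({0..1} \<times> UNIV)) \<subseteq> Tk v (Suc k)"
  proof clarify
    fix y s x assume y: "y \<in> Tk v k" and s: "s \<in> {0..1::real}"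
    then obtain F w where F: "y = comb F w v" "finite F" "F \<noteq> {}" "card F \<le> Suc k"
      "\<forall>x\<in>F. 0 \<le> w x" "sum w F = 1"
      by (auto simp: Tk_def)
    define w2 where "w2 z = (1 - s) * (if z \<in> F then w z else 0) + (if z = x then s else 0)" for z
    have sum_if: "(\<Sum>z\<in>insert x F. (if z \<in> F then f z else 0)) = sum f F" for f :: "'a \<Rightarrow> real"
      using F(2) by (simp add: sum.If_cases Int_absorb1 subset_insertI)
    have sum_if2: "(\<Sum>z\<in>insert x F. (if z = x then f z else 0)) = f x" for f :: "'a \<Rightarrow> real"
      using F(2) by (simp add: sum.If_cases)
    have "sum w2 (insert x F) = (1 - s) * sum w F + s"
      unfolding w2_def sum.distrib sum_distrib_left[symmetric] sum_if
      using sum_if2[of "\<lambda>_. s"] by simp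
    moreover have "comb (insert x F) w2 v = gstep v (y, s, x)"
    proof
      fix i
      have "comb (insert x F) w2 v i = (1 - s) * (\<Sum>z\<in>insert x F. (if z \<in> F then w z * v z i else 0))
          + (\<Sum>z\<in>insert x F. (if z = x then s * v z i else 0))"
      proof -
        have "w2 z * v z i = (1 - s) * (if z \<in> F then w z * v z i else 0) + (if z = x then s * v z i else 0)" for z
          by (simp add: w2_def algebra_simps)
        then show ?thesis unfolding comb_def by (simp add: sum.distrib sum_distrib_left)
      qed
      also have "\<dots> = (1 - s) * y i + s * v x i"
        using sum_if[of "\<lambda>z. w z * v z i"] sum_if2[of "\<lambda>z. s * v z i"] F(1) by (simp add: comb_def)
      finally show "comb (insert x F) w2 v i = gstep v (y, s, x) i" by (simp add: gstep_def)
    qed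
    moreover have "card (insert x F) \<le> Suc (Suc k)" using F(2,4) card_insert_le_m1
      by (metis card_insert_if le_SucI not_less_eq_eq)
    moreover have "\<forall>z\<in>insert x F. 0 \<le> w2 z" using F(5) s by (auto simp: w2_def)
    ultimately show "gstep v (y, s, x) \<in> Tk v (Suc k)"
      unfolding Tk_def using F by (intro CollectI exI[of _ "insert x F"] exI[of _ w2]) auto
  qed
next
  show "Tk v (Suc k) \<subseteq> gstep v ` (Tk v k \<times> ({0..1} \<times> UNIV))"
  proof
    fix y assume "y \<in> Tk v (Suc k)"
    then obtain F w where F: "y = comb F w v" "finite F" "F \<noteq> {}" "card F \<le> Suc (Suc k)"
      "\<forall>x\<in>F. 0 \<le> w x" "sum w F = 1"
      by (auto simp: Tk_def)
    obtain x where x: "x \<in> F" using F(3) by blast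
    define F' where "F' = F - {x}"
    have fF': "finite F'" using F(2) by (simp add: F'_def)
    have Fx: "F = insert x F'" "x \<notin> F'" using x by (auto simp: F'_def)
    have sumw: "w x + sum w F' = 1" using F(6) fF' Fx by simp
    have yi: "y i = w x * v x i + (\<Sum>z\<in>F'. w z * v z i)" for i
      using F(1) fF' Fx by (simp add: comb_def)
    have nn: "0 \<le> sum w F'" using F(5) Fx by (auto intro: sum_nonneg)
    show "y \<in> gstep v ` (Tk v k \<times> ({0..1} \<times> UNIV))"
    proof (cases "w x = 1")
      case True
      then have "sum w F' = 0" using sumw by simp
      then have "\<forall>z\<in>F'. w z = 0" using F(5) Fx fF' by (simp add: sum_nonneg_eq_0_iff)
      then have "y = gstep v (v x, 1, x)" using True by (auto simp: yi gstep_def)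
      then show ?thesis using v_in_Tk[of v x k] by force
    next
      case False
      have wx: "0 \<le> w x" "w x < 1" using F(5) x nn sumw False by auto
      have F'ne: "F' \<noteq> {}" using sumw False by auto
      define w' where "w' z = w z / (1 - w x)" for z
      have "sum w' F' = 1" using wx sumw by (simp add: w'_def sum_divide_distrib[symmetric])
      moreover have "card F' \<le> Suc k" using F(4) Fx fF' by simp
      moreover have "\<forall>z\<in>F'. 0 \<le> w' z" using F(5) Fx wx by (auto simp: w'_def)
      ultimately have inT: "comb F' w' v \<in> Tk v k" unfolding Tk_def using fF' F'ne by blast
      have "y = gstep v (comb F' w' v, w x, x)"
      proof
        fix i
        have "(1 - w x) * comb F' w' v i = (\<Sum>z\<in>F'. w z * v z i)"
          using wx by (simp add: comb_def w'_def sum_distrib_left)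
        then show "y i = gstep v (comb F' w' v, w x, x) i"
          by (simp add: gstep_def yi)
      qed
      then show ?thesis using inT wx by force
    qed
  qed
qed

lemma compact_Tk:
  fixes v :: "'a::topological_space \<Rightarrow> nat \<Rightarrow> real"
  assumes cU: "compact (UNIV :: 'a set)" and cv: "\<And>i. continuous_on UNIV (\<lambda>x. v x i)"
  shows "compact (Tk v k)"
proof (induction k)
  case 0
  have "continuous_on UNIV v" using cv by (intro continuous_on_coordinatewise_then_product)
  then show ?case unfolding Tk_0 using cU by (rule compact_continuous_image)
next
  case (Suc k)
  have c1: "continuous_on UNIV (\<lambda>z::(nat \<Rightarrow> real) \<times> real \<times> 'a. fst z i)" for i
    by (rule continuous_on_product_then_coordinatewise[OF continuous_on_fst[OF continuous_on_id]])
  have c2: "continuous_on UNIV (\<lambda>z::(nat \<Rightarrow> real) \<times> real \<times> 'a. v (snd (snd z)) i)" for i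
    by (rule continuous_on_compose2[OF cv[of i]]) (auto intro!: continuous_intros)
  have "continuous_on UNIV (gstep v)"
    unfolding gstep_def case_prod_beta
    by (intro continuous_on_coordinatewise_then_product continuous_intros c1 c2)
  then have "continuous_on (Tk v k \<times> ({0..1} \<times> UNIV)) (gstep v)"
    by (rule continuous_on_subset) auto
  moreover have "compact (Tk v k \<times> ({0..1::real} \<times> (UNIV :: 'a set)))"
    using Suc cU by (intro compact_Times compact_Icc)
  ultimately show ?case unfolding Tk_Suc by (rule compact_continuous_image)
qed

lemma Tk_rep:
  assumes "y \<in> Tk v k"
  shows "\<exists>F w. rep v m y F w"
proof -
  obtain F w where F: "y = comb F w v" "finite F" "\<forall>x\<in>F. 0 \<le> w x" "sum w F = 1"
    using assms by (auto simp: Tk_def)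
  define F0 where "F0 = {x\<in>F. 0 < w x}"
  have eq: "(\<Sum>x\<in>F0. w x * f x) = (\<Sum>x\<in>F. w x * f x)" for f :: "'a \<Rightarrow> real"
    by (rule sum.mono_neutral_left) (use F in \<open>auto simp: F0_def\<close>)
  have "sum w F0 = 1" using eq[of "\<lambda>_. 1"] F(4) by simp
  moreover have "(\<Sum>x\<in>F0. w x * v x i) = y i" for i using eq[of "\<lambda>x. v x i"] F(1) by (simp add: comb_def)
  ultimately have "rep v m y F0 w" using F(2) by (auto simp: rep_def F0_def)
  then show ?thesis by blast
qed

lemma Tk_sub:
  assumes vz: "\<And>x i. m \<le> i \<Longrightarrow> v x i = 0" and y: "y \<in> Tk v k"
  shows "y \<in> Tk v m"
proof -
  have yz: "y i = 0" if "m \<le> i" for i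
    using y vz[OF that] by (auto simp: Tk_def comb_def)
  obtain F w where "rep v m y F w" using Tk_rep[OF y] by blast
  from minimal_rep[OF this] obtain F' w' where F': "rep v m y F' w'" "card F' \<le> Suc m" by blast
  have "y = comb F' w' v"
  proof
    fix i show "y i = comb F' w' v i"
      using F'(1) yz[of i] vz[of i] by (cases "i < m") (auto simp: rep_def comb_def)
  qed
  moreover have "F' \<noteq> {}" using F'(1) by (auto simp: rep_def)
  moreover have "finite F'" "\<forall>x\<in>F'. 0 \<le> w' x" "sum w' F' = 1" using F'(1) by (auto simp: rep_def less_imp_le)
  ultimately show ?thesis using F'(2) unfolding Tk_def by blast
qed

lemma rep_to_icp:
  fixes phi :: "nat \<Rightarrow> 'a \<Rightarrow> real"
  assumes r: "rep V m (\<lambda>_. 0) F w" and c: "card F \<le> Suc m"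
    and u: "\<forall>w''. rep V m (\<lambda>_. 0) F w'' \<longrightarrow> (\<forall>x\<in>F. w'' x = w x)"
    and V: "\<And>x i. i < m \<Longrightarrow> V x i = phi i x"
  shows "\<exists>n x. 1 \<le> n \<and> n \<le> m + 1 \<and> inj_on x {..<n} \<and>
       interior_conv_point m n (\<lambda>j i. phi i (x j)) (\<lambda>i. 0)"
proof -
  have fin: "finite F" and wpos: "\<forall>x\<in>F. 0 < w x" and sw: "sum w F = 1"
    and mw: "\<forall>i<m. (\<Sum>x\<in>F. w x * V x i) = 0" using r by (auto simp: rep_def)
  define n where "n = card F"
  obtain h where h: "bij_betw h {..<n} F"
    using ex_bij_betw_nat_finite[OF fin] by (auto simp: n_def atLeast0LessThan)
  have inj: "inj_on h {..<n}" using h by (rule bij_betw_imp_inj_on)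
  have himg: "h ` {..<n} = F" using h by (rule bij_betw_imp_surj_on)
  have Fne: "F \<noteq> {}" using sw by auto
  have n1: "1 \<le> n" using Fne fin by (simp add: n_def Suc_le_eq card_gt_0_iff)
  have reidx: "(\<Sum>j<n. f (h j)) = sum f F" for f :: "'a \<Rightarrow> real"
    using sum.reindex_bij_betw[OF h, of f] .
  define P where "P l \<longleftrightarrow> (\<forall>j<n. l j > 0) \<and> (\<Sum>j<n. l j) = 1 \<and>
        (\<forall>i<m. (0::real) = (\<Sum>j<n. l j * phi i (h j)))" for l :: "nat \<Rightarrow> real"
  have ex: "P (\<lambda>j. w (h j))"
    unfolding P_def
  proof (intro conjI allI impI)
    fix j assume "j < n" then show "0 < w (h j)" using wpos himg by auto
  next
    show "(\<Sum>j<n. w (h j)) = 1" using reidx[of w] sw by simp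
  next
    fix i assume i: "i < m"
    have "(\<Sum>j<n. w (h j) * phi i (h j)) = (\<Sum>x\<in>F. w x * phi i x)" using reidx[of "\<lambda>x. w x * phi i x"] .
    also have "\<dots> = (\<Sum>x\<in>F. w x * V x i)" using V[OF i] by simp
    finally show "0 = (\<Sum>j<n. w (h j) * phi i (h j))" using mw i by simp
  qed
  have un: "\<forall>j<n. l j = w (h j)" if Pl: "P l" for l
  proof -
    define wl where "wl z = l (the_inv_into {..<n} h z)" for z
    have wlh: "wl (h j) = l j" if "j < n" for j using that inj by (simp add: wl_def the_inv_into_f_f)
    have "rep V m (\<lambda>_. 0) F wl" unfolding rep_def
    proof (intro conjI ballI allI impI)
      show "finite F" by (rule fin)
    next
      fix x assume "x \<in> F"
      then obtain j where "j < n" "x = h j" using himg by auto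
      then show "0 < wl x" using Pl wlh by (auto simp: P_def)
    next
      have "sum wl F = (\<Sum>j<n. wl (h j))" using reidx[of wl] by simp
      also have "\<dots> = (\<Sum>j<n. l j)" by (intro sum.cong) (auto simp: wlh)
      finally show "sum wl F = 1" using Pl by (simp add: P_def)
    next
      fix i assume i: "i < m"
      have "(\<Sum>x\<in>F. wl x * V x i) = (\<Sum>x\<in>F. wl x * phi i x)" using V[OF i] by simp
      also have "\<dots> = (\<Sum>j<n. wl (h j) * phi i (h j))" using reidx[of "\<lambda>x. wl x * phi i x"] by simp
      also have "\<dots> = (\<Sum>j<n. l j * phi i (h j))" by (intro sum.cong) (auto simp: wlh)
      finally show "(\<Sum>x\<in>F. wl x * V x i) = 0" using Pl i by (simp add: P_def)
    qed
    with u have "\<forall>x\<in>F. wl x = w x" by blast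
    then show ?thesis using wlh himg by force
  qed
  have "interior_conv_point m n (\<lambda>j i. phi i (h j)) (\<lambda>i. 0)"
    unfolding interior_conv_point_def
  proof (intro conjI allI impI)
    show "\<exists>l. (\<forall>j<n. 0 < l j) \<and> sum l {..<n} = 1 \<and> (\<forall>i<m. 0 = (\<Sum>j<n. l j * phi i (h j)))"
      using ex unfolding P_def by (intro exI[of _ "\<lambda>j. w (h j)"]) simp
  next
    fix l l' :: "nat \<Rightarrow> real" and j
    assume a: "((\<forall>j<n. 0 < l j) \<and> sum l {..<n} = 1 \<and> (\<forall>i<m. 0 = (\<Sum>j<n. l j * phi i (h j)))) \<and>
         (\<forall>j<n. 0 < l' j) \<and> sum l' {..<n} = 1 \<and> (\<forall>i<m. 0 = (\<Sum>j<n. l' j * phi i (h j)))"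
      and j: "j < n"
    then have "P l" "P l'" unfolding P_def by simp_all
    then show "l j = l' j" using un[of l] un[of l'] j by simp
  qed
  moreover have "n \<le> m + 1" using c by (simp add: n_def)
  ultimately show ?thesis using n1 inj by blast
qed

lemma quad_lemma:
  fixes a P Q :: real
  assumes h: "\<And>t. 0 < t \<Longrightarrow> t \<le> 1 \<Longrightarrow> a \<le> (1 - t)^2 * a + 2 * t * (1 - t) * P + t^2 * Q"
  shows "a \<le> P"
proof (rule ccontr)
  assume "\<not> a \<le> P"
  then have aP: "P < a" by simp
  define C where "C = \<bar>a - 2 * P + Q\<bar> + 1"
  have Cpos: "C > 0" by (simp add: C_def)
  define t where "t = min 1 ((a - P) / C)"
  have t: "0 < t" "t \<le> 1" using aP Cpos by (auto simp: t_def)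
  have "t * C \<le> a - P" using Cpos by (simp add: t_def min_def field_simps split: if_splits)
  moreover have "t * (a - 2 * P + Q) \<le> t * C" using t by (intro mult_left_mono) (auto simp: C_def)
  ultimately have "t * (a - 2 * P + Q) \<le> a - P" by (rule order.trans[rotated])
  then have "2 * (P - a) + t * (a - 2 * P + Q) < 0" using aP by (smt (verit))
  then have "t * (2 * (P - a) + t * (a - 2 * P + Q)) < 0" using t by (simp add: mult_pos_neg)
  moreover have "(1 - t)^2 * a + 2 * t * (1 - t) * P + t^2 * Q - a = t * (2 * (P - a) + t * (a - 2 * P + Q))"
    by (simp add: power2_eq_square algebra_simps)
  ultimately show False using h[OF t] by linarith
qed

theorem corollary3p4:
  fixes m :: nat and phi :: "nat \<Rightarrow> 'a::t2_space \<Rightarrow> real"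
  assumes "compact (UNIV :: 'a set)"
    and "\<And>i. i < m \<Longrightarrow> continuous_on UNIV (phi i)"
  shows "moment_set m phi \<noteq> {} \<longleftrightarrow>
    (\<exists>n x. 1 \<le> n \<and> n \<le> m + 1 \<and> inj_on x {..<n} \<and>
       interior_conv_point m n (\<lambda>j i. phi i (x j)) (\<lambda>i. 0))"
proof
  assume "moment_set m phi \<noteq> {}"
  then obtain \<mu> where mu: "sets \<mu> = sets (borel :: 'a measure)" "emeasure \<mu> (space \<mu>) = 1"
    "\<And>i. i < m \<Longrightarrow> (\<integral>x. phi i x \<partial>\<mu>) = 0"
    by (auto simp: moment_set_def)
  interpret prob_space \<mu> by (rule prob_spaceI) (rule mu(2))
  have sp: "space \<mu> = UNIV" using sets_eq_imp_space_eq[OF mu(1)] by simp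
  have meas: "phi i \<in> borel_measurable \<mu>" if "i < m" for i
    using borel_measurable_continuous_onI[OF assms(2)[OF that]] measurable_cong_sets[OF mu(1) refl, of borel]
    by (metis (no_types))
  have intg: "integrable \<mu> (phi i)" if i: "i < m" for i
  proof -
    obtain B where B: "\<And>x. x \<in> UNIV \<Longrightarrow> norm (phi i x) \<le> B"
      using continuous_on_compact_bound[OF assms(1) assms(2)[OF i]] by metis
    show ?thesis by (rule integrable_const_bound[where B=B]) (use B meas[OF i] in auto)
  qed
  define V where "V x = (\<lambda>i. if i < m then phi i x else 0)" for x
  have cV: "continuous_on UNIV (\<lambda>x. V x i)" for i
    using assms(2)[of i] by (cases "i < m") (auto simp: V_def)
  have V0: "V x i = 0" if "m \<le> i" for x i using that by (simp add: V_def)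
  define N where "N y = (\<Sum>i<m. (y i)^2)" for y :: "nat \<Rightarrow> real"
  have cN: "continuous_on (Tk V m) N"
    unfolding N_def
    by (intro continuous_intros continuous_on_product_then_coordinatewise[OF continuous_on_id])
  obtain x00 :: 'a where True by blast
  have "Tk V m \<noteq> {}" using v_in_Tk[of V x00 m] by blast
  from continuous_attains_inf[OF compact_Tk[OF assms(1) cV] this cN]
  obtain p where p: "p \<in> Tk V m" "\<And>y. y \<in> Tk V m \<Longrightarrow> N p \<le> N y" by blast
  have ineq: "N p \<le> (\<Sum>i<m. p i * phi i x)" for x
  proof (rule quad_lemma)
    fix t :: real assume t: "0 < t" "t \<le> 1"
    have "gstep V (p, t, x) \<in> Tk V (Suc m)" unfolding Tk_Suc using p(1) t by auto
    then have "gstep V (p, t, x) \<in> Tk V m" using Tk_sub[of m V, OF V0] by blast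
    then have "N p \<le> N (gstep V (p, t, x))" by (rule p(2))
    also have "N (gstep V (p, t, x)) = (1 - t)^2 * N p + 2 * t * (1 - t) * (\<Sum>i<m. p i * phi i x)
         + t^2 * (\<Sum>i<m. (phi i x)^2)"
    proof -
      have "N (gstep V (p, t, x)) = (\<Sum>i<m. (1 - t)^2 * (p i)^2 + 2 * t * (1 - t) * (p i * phi i x) + t^2 * (phi i x)^2)"
        unfolding N_def gstep_def by (intro sum.cong) (auto simp: V_def power2_eq_square algebra_simps)
      also have "\<dots> = (1 - t)^2 * N p + 2 * t * (1 - t) * (\<Sum>i<m. p i * phi i x) + t^2 * (\<Sum>i<m. (phi i x)^2)"
        by (simp add: sum.distrib sum_distrib_left N_def)
      finally show ?thesis .
    qed
    finally show "N p \<le> (1 - t)^2 * N p + 2 * t * (1 - t) * (\<Sum>i<m. p i * phi i x)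
         + t^2 * (\<Sum>i<m. (phi i x)^2)" .
  qed
  have "(\<integral>x. (\<Sum>i<m. p i * phi i x) \<partial>\<mu>) = (\<Sum>i<m. p i * (\<integral>x. phi i x \<partial>\<mu>))"
    using intg by (simp add: integral_sum)
  also have "\<dots> = 0" using mu(3) by simp
  finally have int0: "(\<integral>x. (\<Sum>i<m. p i * phi i x) \<partial>\<mu>) = 0" .
  have "(\<integral>x. N p \<partial>\<mu>) \<le> (\<integral>x. (\<Sum>i<m. p i * phi i x) \<partial>\<mu>)"
    using ineq intg by (intro integral_mono) auto
  then have "N p \<le> 0" using int0 by (simp add: prob_space)
  moreover have "N p \<ge> 0" by (simp add: N_def sum_nonneg)
  ultimately have "N p = 0" by simp
  then have pz: "\<forall>i<m. p i = 0" by (simp add: N_def sum_nonneg_eq_0_iff)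
  obtain F w where "rep V m p F w" using Tk_rep[OF p(1)] by blast
  then have "rep V m (\<lambda>_. 0) F w" using pz by (simp add: rep_def)
  from minimal_rep[OF this] obtain F' w' where F': "rep V m (\<lambda>_. 0) F' w'" "card F' \<le> Suc m"
    "\<forall>w''. rep V m (\<lambda>_. 0) F' w'' \<longrightarrow> (\<forall>x\<in>F'. w'' x = w' x)" by blast
  show "\<exists>n x. 1 \<le> n \<and> n \<le> m + 1 \<and> inj_on x {..<n} \<and>
       interior_conv_point m n (\<lambda>j i. phi i (x j)) (\<lambda>i. 0)"
    by (rule rep_to_icp[OF F'(1,2,3)]) (simp add: V_def)
next
  assume "\<exists>n x. 1 \<le> n \<and> n \<le> m + 1 \<and> inj_on x {..<n} \<and>
       interior_conv_point m n (\<lambda>j i. phi i (x j)) (\<lambda>i. 0)"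
  then obtain n x where icp: "interior_conv_point m n (\<lambda>j i. phi i (x j)) (\<lambda>i. 0)" by blast
  then obtain l where l: "\<forall>j<n. l j > 0" "(\<Sum>j<n. l j) = 1"
    "\<forall>i<m. (0::real) = (\<Sum>j<n. l j * phi i (x j))"
    unfolding interior_conv_point_def by (elim conjE exE) simp
  define xs where "xs = map (\<lambda>j. (x j, l j)) [0..<n]"
  have wf: "pmf_of_list_wf xs"
    using l(1,2) by (auto simp: pmf_of_list_wf_def xs_def o_def sum_set_upt_conv_sum_list_nat[symmetric] atLeast0LessThan less_imp_le)
  define p where "p = pmf_of_list xs"
  define \<mu> where "\<mu> = distr (measure_pmf p) (borel :: 'a measure) id"
  have pmfp: "pmf p a = (\<Sum>j<n. if x j = a then l j else 0)" for a
    using wf unfolding p_def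
    by (simp add: pmf_pmf_of_list xs_def filter_map o_def sum_list_map_filter'
        sum_set_upt_conv_sum_list_nat[symmetric] atLeast0LessThan)
  have "\<mu> \<in> moment_set m phi"
    unfolding moment_set_def
  proof (intro CollectI conjI allI impI)
    show "sets \<mu> = sets borel" by (simp add: \<mu>_def)
    show "emeasure \<mu> (space \<mu>) = 1"
      by (simp add: \<mu>_def emeasure_distr measure_pmf.emeasure_space_1)
    fix i assume i: "i < m"
    have "(\<integral>z. phi i z \<partial>\<mu>) = (\<integral>z. phi i z \<partial>measure_pmf p)"
      unfolding \<mu>_def
      by (subst integral_distr) (auto intro: borel_measurable_continuous_onI assms(2)[OF i])
    also have "\<dots> = (\<Sum>a\<in>x ` {..<n}. phi i a * pmf p a)"
    proof (rule integral_measure_pmf_real)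
      show "finite (x ` {..<n})" by simp
      fix a assume "a \<in> set_pmf p" "phi i a \<noteq> 0"
      then show "a \<in> x ` {..<n}" using set_pmf_of_list[OF wf] by (auto simp: p_def xs_def)
    qed
    also have "\<dots> = (\<Sum>a\<in>x ` {..<n}. \<Sum>j<n. if x j = a then l j * phi i a else 0)"
      by (simp add: pmfp sum_distrib_left if_distrib mult.commute cong: if_cong)
    also have "\<dots> = (\<Sum>j<n. \<Sum>a\<in>x ` {..<n}. if x j = a then l j * phi i a else 0)"
      by (rule sum.swap)
    also have "\<dots> = (\<Sum>j<n. l j * phi i (x j))"
      by (intro sum.cong refl) (simp add: sum.delta)
    finally show "(\<integral>z. phi i z \<partial>\<mu>) = 0" using l(3) i by simp
  qed
  then show "moment_set m phi \<noteq> {}" by blast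
qed

end
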